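(* Let $K$ be a field, $m\ge2$, $d_1,\ldots,d_m$ positive integers, and let $I_2(D)\subset S=K[x_1,\ldots,x_m,y_1,\ldots,y_m]$ be the ideal generated by the $2$-minors of the matrix $D=\begin{pmatrix}x_1^{d_1}&\cdots&x_m^{d_m}\\ y_1^{d_1}&\cdots&y_m^{d_m}\end{pmatrix}$. Then $\mathrm{bar}(I_2(D))=\frac{m(m-1)}{2}$.
   Context: $\mathrm{bar}(I)$ denotes the binomial arithmetical rank: the least integer $s$ such that there exist binomials $B_1,\ldots,B_s\in I$ with $\mathrm{rad}(I)=\mathrm{rad}(B_1,\ldots,B_s)$. *)

theory Defs
  imports Main "HOL-Library.Poly_Mapping"
begin

text \<open>Variable x_i is numbered 2*i,
  variable y_i is numbered 2*i+1, for i in {1..m}.\<close>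

type_synonym 'a mpoly = "(nat \<Rightarrow>\<^sub>0 nat) \<Rightarrow>\<^sub>0 'a"

definition Var :: "nat \<Rightarrow> 'a::comm_ring_1 mpoly" where
  "Var v = Poly_Mapping.single (Poly_Mapping.single v 1) 1"

definition xv :: "nat \<Rightarrow> 'a::comm_ring_1 mpoly" where "xv i = Var (2 * i)"
definition yv :: "nat \<Rightarrow> 'a::comm_ring_1 mpoly" where "yv i = Var (2 * i + 1)"

definition Vars :: "nat \<Rightarrow> nat set" where
  "Vars m = {2 * i | i. 1 \<le> i \<and> i \<le> m} \<union> {2 * i + 1 | i. 1 \<le> i \<and> i \<le> m}"

definition Sring :: "nat \<Rightarrow> 'a::comm_ring_1 mpoly set" where
  "Sring m = {p :: 'a mpoly. \<forall>mon \<in> Poly_Mapping.keys p. Poly_Mapping.keys mon \<subseteq> Vars m}"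

definition gen_ideal :: "nat \<Rightarrow> 'a::comm_ring_1 mpoly set \<Rightarrow> 'a mpoly set" where
  "gen_ideal m G = {p. \<exists>F c. finite F \<and> F \<subseteq> G \<and> (\<forall>g\<in>F. c g \<in> Sring m)
                          \<and> p = (\<Sum>g\<in>F. c g * g)}"

definition rad :: "nat \<Rightarrow> 'a::comm_ring_1 mpoly set \<Rightarrow> 'a mpoly set" where
  "rad m J = {p \<in> Sring m. \<exists>n. p ^ n \<in> J}"

definition binomial :: "'a::comm_ring_1 mpoly \<Rightarrow> bool" where
  "binomial p \<longleftrightarrow> card (Poly_Mapping.keys p) \<le> 2"

definition bar :: "nat \<Rightarrow> 'a::comm_ring_1 mpoly set \<Rightarrow> nat" where
  "bar m I = (LEAST s. \<exists>B :: nat \<Rightarrow> 'a mpoly.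
       (\<forall>i<s. B i \<in> I \<and> binomial (B i)) \<and> rad m I = rad m (gen_ideal m (B ` {..<s})))"

definition minor2 :: "(nat \<Rightarrow> nat) \<Rightarrow> nat \<Rightarrow> nat \<Rightarrow> 'a::comm_ring_1 mpoly" where
  "minor2 d i j = xv i ^ d i * yv j ^ d j - xv j ^ d j * yv i ^ d i"

definition I2D :: "nat \<Rightarrow> (nat \<Rightarrow> nat) \<Rightarrow> 'a::comm_ring_1 mpoly set" where
  "I2D m d = gen_ideal m {minor2 d i j | i j. 1 \<le> i \<and> i < j \<and> j \<le> m}"

end

theory Submission
  imports Defs
begin

definition Rs :: "nat set \<Rightarrow> 'a::comm_ring_1 mpoly \<Rightarrow> 'a mpoly" where
  "Rs A p = Abs_poly_mapping (\<lambda>k. if Poly_Mapping.keys k \<subseteq> A then Poly_Mapping.lookup p k else 0)"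

lemma lookup_Rs: "Poly_Mapping.lookup (Rs A p) k = (if Poly_Mapping.keys k \<subseteq> A then Poly_Mapping.lookup p k else 0)"
proof -
  have "finite {k. (if Poly_Mapping.keys k \<subseteq> A then Poly_Mapping.lookup p k else 0) \<noteq> 0}"
    by (rule finite_subset[OF _ finite_lookup[of p]]) auto
  then show ?thesis unfolding Rs_def by simp
qed

lemma Rs_add: "Rs A (p + q) = Rs A p + Rs A q"
  by (rule poly_mapping_eqI) (simp add: lookup_Rs lookup_add)

lemma Rs_diff: "Rs A (p - q) = Rs A p - Rs A q"
  by (rule poly_mapping_eqI) (simp add: lookup_Rs lookup_minus)

lemma Rs_zero: "Rs A 0 = 0"
  by (rule poly_mapping_eqI) (simp add: lookup_Rs)

lemma Rs_sum: "Rs A (sum f S) = sum (\<lambda>x. Rs A (f x)) S"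
  by (induction S rule: infinite_finite_induct) (auto simp: Rs_zero Rs_add)

lemma Rs_single: "Rs A (Poly_Mapping.single k c) = (if Poly_Mapping.keys k \<subseteq> A then Poly_Mapping.single k c else 0)"
  by (rule poly_mapping_eqI) (auto simp: lookup_Rs lookup_single when_def)

lemma keys_add_nat: "Poly_Mapping.keys (a + b :: 'b \<Rightarrow>\<^sub>0 nat) = Poly_Mapping.keys a \<union> Poly_Mapping.keys b"
  by (auto simp: in_keys_iff lookup_add)

lemma pm_expand: "p = (\<Sum>k\<in>Poly_Mapping.keys p. Poly_Mapping.single k (Poly_Mapping.lookup p k))"
proof (rule poly_mapping_eqI)
  fix x
  show "Poly_Mapping.lookup p x = Poly_Mapping.lookup (\<Sum>k\<in>Poly_Mapping.keys p. Poly_Mapping.single k (Poly_Mapping.lookup p k)) x"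
    unfolding lookup_sum lookup_single
    by (cases "x \<in> Poly_Mapping.keys p") (auto simp: when_def in_keys_iff)
qed

lemma Rs_mult: "Rs A (p * q) = Rs A p * Rs A q"
proof -
  let ?P = "Poly_Mapping.keys p" and ?Q = "Poly_Mapping.keys q"
  let ?s = "\<lambda>p k. Poly_Mapping.single k (Poly_Mapping.lookup p k)"
  have 1: "Rs A (?s p a * ?s q b) = Rs A (?s p a) * Rs A (?s q b)" for a b
    by (simp add: mult_single Rs_single keys_add_nat)
  have "Rs A (p * q) = Rs A ((\<Sum>a\<in>?P. ?s p a) * (\<Sum>b\<in>?Q. ?s q b))"
    by (subst pm_expand[of p], subst pm_expand[of q]) (rule refl)
  also have "\<dots> = (\<Sum>a\<in>?P. \<Sum>b\<in>?Q. Rs A (?s p a) * Rs A (?s q b))"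
    by (simp add: sum_distrib_left sum_distrib_right Rs_sum 1 sum.swap[of _ ?P])
  also have "\<dots> = Rs A (\<Sum>a\<in>?P. ?s p a) * Rs A (\<Sum>b\<in>?Q. ?s q b)"
    by (simp add: sum_distrib_left sum_distrib_right Rs_sum sum.swap[of _ ?P])
  also have "\<dots> = Rs A p * Rs A q"
    by (subst (3) pm_expand[of p], subst (3) pm_expand[of q]) (rule refl)
  finally show ?thesis .
qed

lemma Rs_one: "Rs A 1 = 1"
  by (rule poly_mapping_eqI) (auto simp: lookup_Rs lookup_one when_def)

lemma Rs_power: "Rs A (p ^ n) = Rs A p ^ n"
  by (induction n) (auto simp: Rs_one Rs_mult)


definition mn :: "(nat \<Rightarrow> nat) \<Rightarrow> nat \<Rightarrow> nat \<Rightarrow> (nat \<Rightarrow>\<^sub>0 nat)" where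
  "mn d i j = Poly_Mapping.single (2*i) (d i) + Poly_Mapping.single (2*j+1) (d j)"

lemma Var_pow: "(Var v :: 'a::comm_ring_1 mpoly) ^ k = Poly_Mapping.single (Poly_Mapping.single v k) 1"
proof (induction k)
  case 0 then show ?case by simp
next
  case (Suc k)
  then show ?case by (simp add: Var_def mult_single single_add[symmetric])
qed

lemma minor2_eq: "(minor2 d i j :: 'a::comm_ring_1 mpoly) =
   Poly_Mapping.single (mn d i j) 1 - Poly_Mapping.single (mn d j i) 1"
  by (simp add: minor2_def xv_def yv_def Var_pow mult_single mn_def)

lemma keys_mn: "d i > 0 \<Longrightarrow> d j > 0 \<Longrightarrow> Poly_Mapping.keys (mn d i j) = {2*i, 2*j+1}"
  by (auto simp: mn_def keys_add_nat)

lemma gen_Rs: assumes "p \<in> gen_ideal m G" "\<forall>g\<in>G. Rs A g = 0" shows "Rs A p = 0"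
proof -
  from assms(1) obtain F c where "F \<subseteq> G" "p = (\<Sum>g\<in>F. c g * g)" unfolding gen_ideal_def by blast
  then show ?thesis using assms(2) by (auto simp: Rs_sum Rs_mult intro!: sum.neutral)
qed

lemma single_pow_ne: "\<exists>k'. (Poly_Mapping.single k (1::'a::comm_ring_1) :: ('b::monoid_add \<Rightarrow>\<^sub>0 'a)) ^ n = Poly_Mapping.single k' 1"
proof (induction n)
  case 0 then show ?case by (metis power_0 single_one)
next
  case (Suc n) then show ?case by (auto simp: mult_single)
qed


lemma Vars_mem: "1 \<le> i \<Longrightarrow> i \<le> m \<Longrightarrow> 2*i \<in> Vars m"  "1 \<le> i \<Longrightarrow> i \<le> m \<Longrightarrow> Suc (2*i) \<in> Vars m"
  unfolding Vars_def by auto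

lemma minor_in_S:
  assumes "i \<in> {1..m}" "j \<in> {1..m}" "d i > 0" "d j > 0"
  shows "(minor2 d i j :: 'a::comm_ring_1 mpoly) \<in> Sring m"
proof -
  have "Poly_Mapping.keys (minor2 d i j :: 'a mpoly) \<subseteq> {mn d i j, mn d j i}"
    unfolding minor2_eq using keys_diff[of "Poly_Mapping.single (mn d i j) (1::'a)" "Poly_Mapping.single (mn d j i) 1"]
    by auto
  moreover have "Poly_Mapping.keys (mn d i j) \<subseteq> Vars m" "Poly_Mapping.keys (mn d j i) \<subseteq> Vars m"
    using assms by (auto simp: keys_mn Vars_mem)
  ultimately show ?thesis unfolding Sring_def by blast
qed

lemma binomial_minor: "binomial (minor2 d i j :: 'a::comm_ring_1 mpoly)"
proof -
  have "Poly_Mapping.keys (minor2 d i j :: 'a mpoly) \<subseteq> {mn d i j, mn d j i}"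
    unfolding minor2_eq using keys_diff[of "Poly_Mapping.single (mn d i j) (1::'a)" "Poly_Mapping.single (mn d j i) 1"]
    by auto
  then have "card (Poly_Mapping.keys (minor2 d i j :: 'a mpoly)) \<le> card {mn d i j, mn d j i}"
    by (rule card_mono[rotated]) simp
  also have "\<dots> \<le> 2" by (cases "mn d i j = mn d j i") auto
  finally show ?thesis unfolding binomial_def .
qed

lemma one_S: "(1::'a::comm_ring_1 mpoly) \<in> Sring m" "(-1::'a::comm_ring_1 mpoly) \<in> Sring m"
  unfolding Sring_def by auto

lemma minor_in_I:
  assumes "i \<in> {1..m}" "j \<in> {1..m}" "i \<noteq> j"
  shows "(minor2 d i j :: 'a::comm_ring_1 mpoly) \<in> I2D m d"
proof (cases "i < j")
  case True
  then show ?thesis unfolding I2D_def gen_ideal_def using assms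
    by (intro CollectI exI[of _ "{minor2 d i j}"] exI[of _ "\<lambda>_. 1"]) (auto simp: one_S)
next
  case False
  then have "j < i" using assms by auto
  moreover have "(minor2 d i j :: 'a mpoly) = (-1) * minor2 d j i" by (simp add: minor2_def)
  ultimately show ?thesis unfolding I2D_def gen_ideal_def using assms
    by (intro CollectI exI[of _ "{minor2 d j i}"] exI[of _ "\<lambda>_. -1"]) (auto simp: one_S)
qed

lemma Rs_I_zero:
  assumes "\<forall>i\<in>{1..m}. d i > 0" "p \<in> I2D m d"
  shows "Rs {v} (p :: 'a::comm_ring_1 mpoly) = 0"
  using assms(2) unfolding I2D_def
proof (rule gen_Rs, safe)
  fix i j assume ij: "1 \<le> i" "i < j" "j \<le> m"
  then have "d i > 0" "d j > 0" using assms(1) by auto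
  then have "\<not> Poly_Mapping.keys (mn d i j) \<subseteq> {v}" "\<not> Poly_Mapping.keys (mn d j i) \<subseteq> {v}"
    by (auto simp: keys_mn) presburger+
  then show "Rs {v} (minor2 d i j :: 'a mpoly) = 0"
    by (simp add: minor2_eq Rs_diff Rs_single)
qed

lemma Rs_minor:
  assumes "d i > 0" "d j > 0" "i \<noteq> j"
  shows "Rs {2*i, 2*j+1} (minor2 d i j :: 'a::comm_ring_1 mpoly) = Poly_Mapping.single (mn d i j) 1"
proof -
  have "\<not> Poly_Mapping.keys (mn d j i) \<subseteq> {2*i, 2*j+1}" using assms by (auto simp: keys_mn)
  moreover have "Poly_Mapping.keys (mn d i j) \<subseteq> {2*i, 2*j+1}" using assms by (auto simp: keys_mn)
  ultimately show ?thesis by (simp add: minor2_eq Rs_diff Rs_single)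
qed


definition Pairs :: "nat \<Rightarrow> (nat \<times> nat) set" where
  "Pairs m = {(i,j). i \<in> {1..m} \<and> j \<in> {1..m} \<and> i \<noteq> j}"

lemma card_Pairs: "card (Pairs m) = m * (m - 1)"
proof -
  have "Pairs m = {1..m} \<times> {1..m} - (\<lambda>i. (i,i)) ` {1..m}" unfolding Pairs_def by auto
  moreover have "card ((\<lambda>i. (i,i)) ` {1..m}) = m" by (subst card_image) (auto simp: inj_on_def)
  moreover have "card ({1..m} \<times> {1..m} - (\<lambda>i. (i,i)) ` {1..m}) = card ({1..m} \<times> {1..m::nat}) - card ((\<lambda>i. (i,i)) ` {1..m})"
    by (rule card_Diff_subset) auto
  ultimately have "card (Pairs m) = m * m - m"
    by (simp add: card_cartesian_product)
  then show ?thesis by (simp add: diff_mult_distrib2)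
qed

lemma lower:
  fixes B :: "nat \<Rightarrow> 'a::field mpoly"
  assumes dpos: "\<forall>i\<in>{1..m}. d i > 0"
    and B: "\<forall>k<s. B k \<in> I2D m d \<and> binomial (B k)"
    and R: "rad m (I2D m d) = rad m (gen_ideal m (B ` {..<s}))"
  shows "m * (m - 1) \<le> 2 * s"
proof -
  define Aof where "Aof = (\<lambda>(i::nat,j::nat). {2*i, 2*j+1})"
  have a: "\<exists>k. k < s \<and> (\<exists>mo \<in> Poly_Mapping.keys (B k). Poly_Mapping.keys mo \<subseteq> Aof p)"
    if hp: "p \<in> Pairs m" for p
  proof -
    obtain i j where p: "p = (i,j)" "i \<in> {1..m}" "j \<in> {1..m}" "i \<noteq> j"
      using hp unfolding Pairs_def by (cases p) auto
    have di: "d i > 0" "d j > 0" using dpos p by auto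
    have "(minor2 d i j :: 'a mpoly) \<in> rad m (I2D m d)"
      unfolding rad_def using minor_in_S[OF p(2,3) di] minor_in_I[OF p(2,3,4)]
      by (auto intro!: exI[of _ 1])
    then have "(minor2 d i j :: 'a mpoly) \<in> rad m (gen_ideal m (B ` {..<s}))" using R by simp
    then obtain n where n: "(minor2 d i j :: 'a mpoly) ^ n \<in> gen_ideal m (B ` {..<s})"
      unfolding rad_def by blast
    obtain k' where k': "(Poly_Mapping.single (mn d i j) (1::'a)) ^ n = Poly_Mapping.single k' 1"
      using single_pow_ne by blast
    have "Rs (Aof p) ((minor2 d i j :: 'a mpoly) ^ n) \<noteq> 0"
      unfolding Rs_power p Aof_def prod.case Rs_minor[OF di p(4)] k'
      by (metis lookup_single_eq lookup_zero zero_neq_one)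
    then obtain g where g: "g \<in> B ` {..<s}" "Rs (Aof p) g \<noteq> 0"
      using gen_Rs[OF n] by blast
    then obtain k where k: "k < s" "g = B k" by auto
    from g(2) obtain mo where "Poly_Mapping.lookup (Rs (Aof p) g) mo \<noteq> 0"
      by (metis poly_mapping_eqI lookup_zero)
    then have "Poly_Mapping.keys mo \<subseteq> Aof p" "mo \<in> Poly_Mapping.keys (B k)"
      by (auto simp: lookup_Rs k in_keys_iff split: if_splits)
    then show ?thesis using k by blast
  qed
  have b: "\<not> Poly_Mapping.keys mo \<subseteq> {v}" if "k < s" "mo \<in> Poly_Mapping.keys (B k)" for k mo v
  proof
    assume "Poly_Mapping.keys mo \<subseteq> {v}"
    moreover have "Rs {v} (B k) = 0" using Rs_I_zero[OF dpos] B that(1) by blast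
    ultimately show False using that(2)
      by (metis lookup_Rs lookup_zero in_keys_iff)
  qed
  obtain f where f: "\<forall>p \<in> Pairs m. fst (f p) < s \<and> snd (f p) \<in> Poly_Mapping.keys (B (fst (f p)))
      \<and> Poly_Mapping.keys (snd (f p)) \<subseteq> Aof p"
    using bchoice[of "Pairs m" "\<lambda>p x. fst x < s \<and> snd x \<in> Poly_Mapping.keys (B (fst x)) \<and> Poly_Mapping.keys (snd x) \<subseteq> Aof p"] a
    by fastforce
  have inj: "inj_on f (Pairs m)"
  proof (rule inj_onI, rule ccontr)
    fix p q assume pq: "p \<in> Pairs m" "q \<in> Pairs m" "f p = f q" "p \<noteq> q"
    obtain i j i' j' where ij: "p = (i,j)" "q = (i',j')" by fastforce
    have "Aof p \<inter> Aof q \<subseteq> {2*j+1} \<or> Aof p \<inter> Aof q \<subseteq> {2*i}"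
      using pq(4) unfolding ij Aof_def by auto presburger+
    moreover have "Poly_Mapping.keys (snd (f p)) \<subseteq> Aof p \<inter> Aof q"
      using f pq by (metis Int_subset_iff)
    ultimately show False using b f pq(1) by blast
  qed
  have sub: "f ` Pairs m \<subseteq> Sigma {..<s} (\<lambda>k. Poly_Mapping.keys (B k))"
  proof
    fix y assume "y \<in> f ` Pairs m"
    then obtain p where p: "p \<in> Pairs m" "y = f p" by blast
    then show "y \<in> Sigma {..<s} (\<lambda>k. Poly_Mapping.keys (B k))"
      using f by (cases y) force
  qed
  have "m * (m - 1) = card (f ` Pairs m)" by (simp add: card_image[OF inj] card_Pairs)
  also have "\<dots> \<le> card (Sigma {..<s} (\<lambda>k. Poly_Mapping.keys (B k)))"
    by (rule card_mono[OF _ sub]) auto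
  also have "\<dots> = (\<Sum>k<s. card (Poly_Mapping.keys (B k)))" by (simp add: card_SigmaI)
  also have "\<dots> \<le> (\<Sum>k<s. 2)" by (rule sum_mono) (use B in \<open>auto simp: binomial_def\<close>)
  finally show ?thesis by simp
qed


lemma upper:
  fixes m :: nat and d :: "nat \<Rightarrow> nat"
  shows "\<exists>B :: nat \<Rightarrow> 'a::field mpoly.
       (\<forall>i<m * (m - 1) div 2. B i \<in> I2D m d \<and> binomial (B i)) \<and>
       rad m (I2D m d) = rad m (gen_ideal m (B ` {..<m * (m - 1) div 2}))"
proof -
  define U where "U = {(i,j). 1 \<le> i \<and> i < j \<and> j \<le> (m::nat)}"
  have fU: "finite U" unfolding U_def by (rule finite_subset[of _ "{0..m} \<times> {0..m}"]) auto
  have "Pairs m = U \<union> prod.swap ` U" unfolding U_def Pairs_def by auto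
  moreover have "U \<inter> prod.swap ` U = {}" unfolding U_def by auto
  moreover have "card (prod.swap ` U) = card U" by (rule card_image) simp
  ultimately have "card (Pairs m) = 2 * card U" using fU by (simp add: card_Un_disjoint)
  then have cU: "card U = m * (m - 1) div 2" by (simp add: card_Pairs)
  obtain h where h: "bij_betw h {0..<card U} U" using ex_bij_betw_nat_finite[OF fU] by blast
  define B where "B = (\<lambda>k. minor2 d (fst (h k)) (snd (h k)) :: 'a mpoly)"
  have img: "B ` {..<card U} = {minor2 d i j | i j. 1 \<le> i \<and> i < j \<and> j \<le> m}"
  proof -
    have hU: "h ` {..<card U} = U" using bij_betw_imp_surj_on[OF h] by (simp add: atLeast0LessThan)
    have "B ` {..<card U} = (\<lambda>(i,j). minor2 d i j) ` (h ` {..<card U})"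
      unfolding B_def image_image by (simp add: case_prod_beta)
    also have "\<dots> = {minor2 d i j | i j. 1 \<le> i \<and> i < j \<and> j \<le> m}"
      unfolding hU by (auto simp: U_def image_iff)
    finally show ?thesis .
  qed
  have "\<forall>k<card U. B k \<in> I2D m d \<and> binomial (B k)"
  proof (intro allI impI conjI)
    fix k assume "k < card U"
    then have "B k \<in> B ` {..<card U}" by auto
    then show "B k \<in> I2D m d" unfolding img I2D_def gen_ideal_def
      by (auto intro!: exI[of _ "{B k}"] exI[of _ "\<lambda>_. 1"] simp: one_S)
    show "binomial (B k)" unfolding B_def by (rule binomial_minor)
  qed
  moreover have "gen_ideal m (B ` {..<card U}) = I2D m d" unfolding img I2D_def ..
  ultimately show ?thesis unfolding cU by metis
qed

theorem theorem4p8: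
  fixes m :: nat and d :: "nat \<Rightarrow> nat"
  assumes "m \<ge> 2" and "\<forall>i\<in>{1..m}. d i > 0"
  shows "bar m (I2D m d :: 'a::field mpoly set) = m * (m - 1) div 2"
  unfolding bar_def
proof (rule Least_equality)
  show "\<exists>B :: nat \<Rightarrow> 'a mpoly.
       (\<forall>i<m * (m - 1) div 2. B i \<in> I2D m d \<and> binomial (B i)) \<and>
       rad m (I2D m d) = rad m (gen_ideal m (B ` {..<m * (m - 1) div 2}))"
    by (rule upper)
next
  fix s assume "\<exists>B :: nat \<Rightarrow> 'a mpoly. (\<forall>i<s. B i \<in> I2D m d \<and> binomial (B i)) \<and>
       rad m (I2D m d) = rad m (gen_ideal m (B ` {..<s}))"
  then obtain B :: "nat \<Rightarrow> 'a mpoly" where "\<forall>i<s. B i \<in> I2D m d \<and> binomial (B i)"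
    "rad m (I2D m d) = rad m (gen_ideal m (B ` {..<s}))" by blast
  from lower[OF assms(2) this] show "m * (m - 1) div 2 \<le> s" by simp
qed

end
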